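(* Let $R$ be a ring and $n \geq 3$ an integer. Then the following are equivalent: the direct power $R^n$ is a GSWNC ring; $R^n$ is a GSNC ring; $R$ is strongly nil-clean.
   Context: All rings are associative with identity. An element $a$ of a ring is strongly nil-clean if $a = e + q$ with $e$ idempotent, $q$ nilpotent and $eq = qe$; it is strongly weakly nil-clean if there exist an idempotent $e$ and a nilpotent $q$ with $eq = qe$ such that $a = q + e$ or $a = q - e$. A ring is strongly nil-clean if all its elements are; it is GSNC if every non-invertible element is strongly nil-clean, and GSWNC if every non-invertible element is strongly weakly nil-clean. *)

theory Defs
  imports "HOL-Analysis.Analysis"
begin

definition idempotent_el :: "'a::ring_1 \<Rightarrow> bool" where
  "idempotent_el e \<longleftrightarrow> e * e = e"

definition nilpotent_el :: "'a::ring_1 \<Rightarrow> bool" where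
  "nilpotent_el q \<longleftrightarrow> (\<exists>k::nat. q ^ k = 0)"

definition invertible_el :: "'a::ring_1 \<Rightarrow> bool" where
  "invertible_el a \<longleftrightarrow> (\<exists>b. a * b = 1 \<and> b * a = 1)"

definition strongly_nil_clean_el :: "'a::ring_1 \<Rightarrow> bool" where
  "strongly_nil_clean_el a \<longleftrightarrow>
     (\<exists>e q. idempotent_el e \<and> nilpotent_el q \<and> e * q = q * e \<and> a = e + q)"

definition strongly_weakly_nil_clean_el :: "'a::ring_1 \<Rightarrow> bool" where
  "strongly_weakly_nil_clean_el a \<longleftrightarrow>
     (\<exists>e q. idempotent_el e \<and> nilpotent_el q \<and> e * q = q * e \<and> (a = q + e \<or> a = q - e))"

definition strongly_nil_clean_ring :: "'a::ring_1 itself \<Rightarrow> bool" where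
  "strongly_nil_clean_ring _ \<longleftrightarrow> (\<forall>a::'a. strongly_nil_clean_el a)"

definition GSNC_ring :: "'a::ring_1 itself \<Rightarrow> bool" where
  "GSNC_ring _ \<longleftrightarrow> (\<forall>a::'a. \<not> invertible_el a \<longrightarrow> strongly_nil_clean_el a)"

definition GSWNC_ring :: "'a::ring_1 itself \<Rightarrow> bool" where
  "GSWNC_ring _ \<longleftrightarrow> (\<forall>a::'a. \<not> invertible_el a \<longrightarrow> strongly_weakly_nil_clean_el a)"

end

theory Submission
  imports Defs
begin

lemma vec_power_nth: "((q::'a::ring_1 ^ 'n) ^ k) $ i = (q $ i) ^ k"
  by (induction k) auto

lemma nil_le: "(x::'a::ring_1) ^ k = 0 \<Longrightarrow> k \<le> m \<Longrightarrow> x ^ m = 0"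
  by (metis le_add_diff_inverse mult_zero_left power_add)

lemma snc_vec:
  assumes "strongly_nil_clean_ring TYPE('a::ring_1)"
  shows "strongly_nil_clean_el (x :: 'a ^ 'n::finite)"
proof -
  have "\<forall>i. \<exists>e q k. e * e = e \<and> q ^ k = 0 \<and> e * q = q * e \<and> x $ i = e + q"
    using assms unfolding strongly_nil_clean_ring_def strongly_nil_clean_el_def
      idempotent_el_def nilpotent_el_def by blast
  then obtain E Q K where EQ: "\<And>i. E i * E i = E i \<and> Q i ^ K i = 0 \<and> E i * Q i = Q i * E i \<and> x $ i = E i + Q i"
    by metis
  define N where "N = (\<Sum>i\<in>UNIV. K i)"
  have KN: "K i \<le> N" for i unfolding N_def by (rule member_le_sum) auto
  let ?e = "\<chi> i. E i" and ?q = "\<chi> i. Q i"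
  have "?e * ?e = ?e" using EQ by (simp add: vec_eq_iff)
  moreover have "?q ^ N = 0" using EQ KN nil_le by (simp add: vec_eq_iff vec_power_nth) blast
  moreover have "?e * ?q = ?q * ?e" using EQ by (simp add: vec_eq_iff)
  moreover have "x = ?e + ?q" using EQ by (simp add: vec_eq_iff)
  ultimately show ?thesis unfolding strongly_nil_clean_el_def idempotent_el_def nilpotent_el_def
    by blast
qed

lemma noninv:
  assumes "(1::'a::ring_1) \<noteq> 0" "(x :: 'a ^ 'n::finite) $ k = 0"
  shows "\<not> invertible_el x"
proof
  assume "invertible_el x"
  then obtain y where "x * y = 1" unfolding invertible_el_def by blast
  hence "(x * y) $ k = 1 $ k" by simp
  thus False using assms by simp
qed

lemma three:
  assumes "CARD('n::finite) \<ge> 3"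
  obtains i j k :: "'n::finite" where "i \<noteq> j" "i \<noteq> k" "j \<noteq> k"
proof -
  obtain i :: "'n" where True by simp
  have "card (UNIV - {i}) \<ge> 2" using assms by (simp add: card_Diff_singleton)
  then obtain j where j: "j \<in> UNIV - {i}"
    by (metis all_not_in_conv card.empty not_numeral_le_zero)
  have "card (UNIV - {i} - {j}) \<ge> 1" using assms j by (simp add: card_Diff_singleton)
  then obtain k where k: "k \<in> UNIV - {i} - {j}"
    by (metis all_not_in_conv card.empty not_one_le_zero)
  show ?thesis using that j k by blast
qed

lemma triv:
  assumes "(1::'a::ring_1) = 0"
  shows "strongly_nil_clean_el (a::'a)"
proof -
  have "a = 0" by (metis assms mult_1 mult_zero_left)
  thus ?thesis unfolding strongly_nil_clean_el_def idempotent_el_def nilpotent_el_def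
    by (rule_tac x=0 in exI, rule_tac x=0 in exI) (auto intro: exI[of _ 1])
qed

theorem corollary2p8:
  assumes "CARD('n::finite) \<ge> 3"
  shows "(GSWNC_ring TYPE('a::ring_1 ^ 'n) \<longleftrightarrow> GSNC_ring TYPE('a ^ 'n))
       \<and> (GSNC_ring TYPE('a ^ 'n) \<longleftrightarrow> strongly_nil_clean_ring TYPE('a))"
proof -
  obtain i j k :: 'n where ijk: "i \<noteq> j" "i \<noteq> k" "j \<noteq> k" using three assms by blast
  have A: "strongly_nil_clean_ring TYPE('a) \<Longrightarrow> GSNC_ring TYPE('a ^ 'n) \<and> GSWNC_ring TYPE('a ^ 'n)"
  proof -
    assume S: "strongly_nil_clean_ring TYPE('a)"
    have "strongly_nil_clean_el x \<and> strongly_weakly_nil_clean_el x" for x :: "'a ^ 'n"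
    proof -
      from snc_vec[OF S, of x] obtain e q where "idempotent_el e" "nilpotent_el q" "e * q = q * e" "x = e + q"
        unfolding strongly_nil_clean_el_def by blast
      thus ?thesis unfolding strongly_nil_clean_el_def strongly_weakly_nil_clean_el_def
        by (metis add.commute)
    qed
    thus ?thesis unfolding GSNC_ring_def GSWNC_ring_def by blast
  qed
  have B: "strongly_nil_clean_ring TYPE('a)" if G: "GSNC_ring TYPE('a ^ 'n)"
    unfolding strongly_nil_clean_ring_def
  proof
    fix a :: 'a
    show "strongly_nil_clean_el a"
    proof (cases "(1::'a) = 0")
      case True thus ?thesis by (rule triv)
    next
      case False
      let ?x = "(\<chi> t. if t = i then a else 0) :: 'a ^ 'n"
      have "\<not> invertible_el ?x" using noninv[OF False, of ?x k] ijk by simp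
      with G obtain e q where "idempotent_el e" "nilpotent_el q" "e * q = q * e" "?x = e + q"
        unfolding GSNC_ring_def strongly_nil_clean_el_def by blast
      hence "idempotent_el (e$i)" "nilpotent_el (q$i)" "e$i * q$i = q$i * e$i" "a = e$i + q$i"
      proof -
        assume eq: "idempotent_el e" "nilpotent_el q" "e * q = q * e" "?x = e + q"
        show "idempotent_el (e$i)" using eq(1) unfolding idempotent_el_def
          by (metis vector_mult_component)
        show "nilpotent_el (q$i)" using eq(2) unfolding nilpotent_el_def
          by (metis vec_power_nth zero_index)
        show "e$i * q$i = q$i * e$i" using eq(3) by (metis vector_mult_component)
        have "?x $ i = (e + q) $ i" using eq(4) by simp
        thus "a = e$i + q$i" by simp
      qed
      thus ?thesis unfolding strongly_nil_clean_el_def by blast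
    qed
  qed
  have C: "strongly_nil_clean_ring TYPE('a)" if G: "GSWNC_ring TYPE('a ^ 'n)"
    unfolding strongly_nil_clean_ring_def
  proof
    fix a :: 'a
    show "strongly_nil_clean_el a"
    proof (cases "(1::'a) = 0")
      case True thus ?thesis by (rule triv)
    next
      case False
      let ?x = "(\<chi> t. if t = i then a else if t = j then -a else 0) :: 'a ^ 'n"
      have "\<not> invertible_el ?x" using noninv[OF False, of ?x k] ijk by simp
      with G obtain e q where eq: "idempotent_el e" "nilpotent_el q" "e * q = q * e"
          and d: "?x = q + e \<or> ?x = q - e"
        unfolding GSWNC_ring_def strongly_weakly_nil_clean_el_def by blast
      have c: "idempotent_el (e$t)" "nilpotent_el (q$t)" "e$t * q$t = q$t * e$t" for t
      proof -
        show "idempotent_el (e$t)" using eq(1) unfolding idempotent_el_def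
          by (metis vector_mult_component)
        show "nilpotent_el (q$t)" using eq(2) unfolding nilpotent_el_def
          by (metis vec_power_nth zero_index)
        show "e$t * q$t = q$t * e$t" using eq(3) by (metis vector_mult_component)
      qed
      from d show ?thesis
      proof
        assume "?x = q + e"
        hence "?x $ i = (q + e) $ i" by simp
        hence "a = e$i + q$i" by (simp add: add.commute)
        thus ?thesis using c unfolding strongly_nil_clean_el_def by blast
      next
        assume "?x = q - e"
        hence "?x $ j = (q - e) $ j" by simp
        hence "-a = q$j - e$j" using ijk by simp
        hence "a = - (q$j - e$j)" by (metis minus_minus)
        hence a: "a = e$j + (- q$j)" by simp
        from c(2)[of j] obtain m where m: "(q$j) ^ m = 0" unfolding nilpotent_el_def by (elim exE)
        have "(- q$j) ^ m = (-1) ^ m * (q$j) ^ m" by (rule power_minus)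
        hence "(- q$j) ^ m = 0" using m by simp
        hence "nilpotent_el (- q$j)" unfolding nilpotent_el_def by blast
        moreover have "e$j * (- q$j) = (- q$j) * e$j" using c(3)[of j] by simp
        ultimately show ?thesis using a c(1) unfolding strongly_nil_clean_el_def by blast
      qed
    qed
  qed
  show ?thesis using A B C by blast
qed

end
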